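(* Let $\mathcal{N}$ be a Beeping Network with $n$ nodes and maximum degree $\Delta$, with unique IDs from $[1,n^c]$ for a constant $c\ge1$, where each node knows $n$, $c$, $\Delta$, $h$ and an upper bound $B$ on the size in bits of each input message. There is a deterministic distributed algorithm solving the $B$-bit $h$-hop simulation problem on $\mathcal{N}$ in $O(h\cdot B\Delta^{h+2}\,\mathrm{polylog}\, n)$ rounds.
   Context: A Beeping Network is a network of $n$ nodes whose topology is an undirected graph $G=(V,E)$. Time is divided into synchronous rounds and all nodes start simultaneously. In each round every node either beeps or listens; a listening node hears "silence" if no neighbor beeps and "noise" if at least one neighbor beeps, and cannot distinguish one beep from several. $B$-bit $h$-hop simulation: each node holds messages (possibly different for different destinations) of at most $B$ bits addressed to other nodes, and must deliver each such message to its destination whenever the destination is within distance $h$ (hops) of the source; messages to nodes at distance more than $h$ need not be delivered. $\mathrm{polylog}\, n$ denotes a fixed polylogarithmic function of $n$. *)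

theory Defs
  imports Complex_Main
begin

text \<open>Beeping network model. Nodes are identified by their IDs (natural numbers).
  The topology is a symmetric irreflexive adjacency relation E on a finite vertex set V.\<close>

definition undirected_graph :: "nat set \<Rightarrow> (nat \<Rightarrow> nat \<Rightarrow> bool) \<Rightarrow> bool" where
  "undirected_graph V E \<longleftrightarrow> finite V \<and> (\<forall>x y. E x y \<longrightarrow> x \<in> V \<and> y \<in> V \<and> x \<noteq> y \<and> E y x)"

definition degree :: "(nat \<Rightarrow> nat \<Rightarrow> bool) \<Rightarrow> nat \<Rightarrow> nat" where
  "degree E v = card {w. E v w}"

definition max_degree_is :: "nat set \<Rightarrow> (nat \<Rightarrow> nat \<Rightarrow> bool) \<Rightarrow> nat \<Rightarrow> bool" where
  "max_degree_is V E \<Delta> \<longleftrightarrow> (\<forall>v\<in>V. degree E v \<le> \<Delta>) \<and> (\<exists>v\<in>V. degree E v = \<Delta>)"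

definition within_hops :: "(nat \<Rightarrow> nat \<Rightarrow> bool) \<Rightarrow> nat \<Rightarrow> nat \<Rightarrow> nat \<Rightarrow> bool" where
  "within_hops E h u v \<longleftrightarrow> (\<exists>k\<le>h. (u, v) \<in> {(x, y). E x y} ^^ k)"

text \<open>Execution of a deterministic beeping protocol. act v H: does node v beep in the
  current round, given its history H of what it heard in previous rounds (node-local
  knowledge such as its ID, inputs and global parameters is baked into act v).
  A listening node hears noise (True) iff some neighbour beeps; a beeping node
  receives no feedback (recorded as False).  exec act E r v = history of v after r rounds.\<close>
fun exec :: "(nat \<Rightarrow> bool list \<Rightarrow> bool) \<Rightarrow> (nat \<Rightarrow> nat \<Rightarrow> bool) \<Rightarrow> nat \<Rightarrow> nat \<Rightarrow> bool list" where
  "exec act E 0 = (\<lambda>v. [])"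
| "exec act E (Suc r) = (\<lambda>v. exec act E r v @
      [\<not> act v (exec act E r v) \<and> (\<exists>w. E v w \<and> act w (exec act E r w))])"

text \<open>Global parameters known to every node: (n, c, Delta, h, B).\<close>
type_synonym params = "nat \<times> real \<times> nat \<times> nat \<times> nat"

text \<open>A deterministic distributed algorithm: a beep rule and an output rule, each a
  function of the global parameters, the node's own ID, its input messages
  (destination ID \<mapsto> message) and its history of heard signals.  The output maps a
  source ID to the message received from that source.\<close>
type_synonym beep_rule = "params \<Rightarrow> nat \<Rightarrow> (nat \<Rightarrow> bool list option) \<Rightarrow> bool list \<Rightarrow> bool"
type_synonym output_rule = "params \<Rightarrow> nat \<Rightarrow> (nat \<Rightarrow> bool list option) \<Rightarrow> bool list \<Rightarrow> (nat \<Rightarrow> bool list option)"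

text \<open>The algorithm solves B-bit h-hop simulation on (V,E) with inputs m within T rounds.
  m u v = Some x: node u holds message x (at most B bits) for destination v.\<close>
definition solves_simulation ::
  "beep_rule \<Rightarrow> output_rule \<Rightarrow> params \<Rightarrow> nat \<Rightarrow> nat set \<Rightarrow> (nat \<Rightarrow> nat \<Rightarrow> bool)
     \<Rightarrow> (nat \<Rightarrow> nat \<Rightarrow> bool list option) \<Rightarrow> bool" where
  "solves_simulation act out p T V E m \<longleftrightarrow>
     (let H = exec (\<lambda>v. act p v (m v)) E T; h = fst (snd (snd (snd p))) in
      \<forall>u\<in>V. \<forall>v\<in>V. \<forall>x. u \<noteq> v \<longrightarrow> within_hops E h u v \<longrightarrow> m u v = Some x \<longrightarrow>
         out p v (m v) (H v) u = Some x)"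

end

theory Submission
  imports Defs "HOL-Library.FuncSet"
begin

lemma card_small_sets:
  fixes N d :: nat
  shows "card {S. S \<subseteq> {1..N} \<and> card S \<le> d} \<le> (N+1)^d"
proof -
  let ?L = "{xs. set xs \<subseteq> {0..N} \<and> length xs = d}"
  have sub: "{S. S \<subseteq> {1..N} \<and> card S \<le> d} \<subseteq> (\<lambda>xs. set xs - {0}) ` ?L"
  proof
    fix S assume S: "S \<in> {S. S \<subseteq> {1..N} \<and> card S \<le> d}"
    hence S1: "S \<subseteq> {1..N}" and S2: "card S \<le> d" by simp_all
    have fS: "finite S" using S1 by (rule finite_subset) simp
    obtain ys where ys: "set ys = S" "distinct ys" using finite_distinct_list[OF fS] by blast
    have ly: "length ys = card S" using ys distinct_card by metis
    define xs where "xs = ys @ replicate (d - card S) (0::nat)"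
    have "set xs \<subseteq> {0..N}" unfolding xs_def using S1 ys(1) by (auto simp: set_replicate_conv_if)
    moreover have "length xs = d" unfolding xs_def using ly S2 by simp
    ultimately have "xs \<in> ?L" by simp
    moreover have "set xs - {0} = S" unfolding xs_def using S1 ys(1) by (auto simp: set_replicate_conv_if)
    ultimately show "S \<in> (\<lambda>xs. set xs - {0}) ` ?L" by (intro image_eqI[of _ _ xs]) auto
  qed
  have "card {S. S \<subseteq> {1..N} \<and> card S \<le> d} \<le> card ((\<lambda>xs. set xs - {0}) ` ?L)"
    by (rule card_mono[OF _ sub]) (simp add: finite_lists_length_eq)
  also have "\<dots> \<le> card ?L" by (rule card_image_le) (simp add: finite_lists_length_eq)
  also have "\<dots> = (N+1)^d" by (simp add: card_lists_length_eq)
  finally show ?thesis .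
qed

lemma card_bad_pair:
  fixes D :: "nat set" and Q :: nat
  assumes "finite D" "u \<in> D" "w \<in> D" "u \<noteq> w"
  shows "card {f \<in> D \<rightarrow>\<^sub>E {..<Q}. f u = f w} \<le> Q ^ (card D - 1)"
proof -
  let ?A = "{f \<in> D \<rightarrow>\<^sub>E {..<Q}. f u = f w}"
  have inj: "inj_on (\<lambda>f. restrict f (D - {u})) ?A"
  proof (rule inj_onI)
    fix f g assume f: "f \<in> ?A" and g: "g \<in> ?A" and eq: "restrict f (D - {u}) = restrict g (D - {u})"
    show "f = g"
    proof
      fix x
      show "f x = g x"
      proof (cases "x \<in> D")
        case True
        show ?thesis
        proof (cases "x = u")
          case True
          have "restrict f (D - {u}) w = restrict g (D - {u}) w" using eq by simp
          hence "f w = g w" using assms by simp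
          thus ?thesis using f g True by simp
        next
          case False
          have "restrict f (D - {u}) x = restrict g (D - {u}) x" using eq by simp
          thus ?thesis using False \<open>x \<in> D\<close> by simp
        qed
      next
        case False
        thus ?thesis using f g by (auto simp: PiE_def extensional_def)
      qed
    qed
  qed
  have img: "(\<lambda>f. restrict f (D - {u})) ` ?A \<subseteq> (D - {u}) \<rightarrow>\<^sub>E {..<Q}" by (intro image_subsetI) (simp add: restrict_PiE_iff PiE_iff)
  have "card ?A \<le> card ((D - {u}) \<rightarrow>\<^sub>E {..<Q})"
    by (rule card_inj_on_le[OF inj img]) (simp add: finite_PiE assms)
  also have "\<dots> = Q ^ (card D - 1)" using assms by (simp add: card_PiE)
  finally show ?thesis .
qed

lemma card_bad:
  fixes D S :: "nat set" and Q :: nat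
  assumes "finite D" "u \<in> D" "S \<subseteq> D" "u \<notin> S"
  shows "card {f \<in> D \<rightarrow>\<^sub>E {..<Q}. f u \<in> f ` S} \<le> card S * Q ^ (card D - 1)"
proof -
  have fS: "finite S" using assms finite_subset by blast
  have eq: "{f \<in> D \<rightarrow>\<^sub>E {..<Q}. f u \<in> f ` S} = (\<Union>w\<in>S. {f \<in> D \<rightarrow>\<^sub>E {..<Q}. f u = f w})" by auto
  have "card (\<Union>w\<in>S. {f \<in> D \<rightarrow>\<^sub>E {..<Q}. f u = f w}) \<le> (\<Sum>w\<in>S. card {f \<in> D \<rightarrow>\<^sub>E {..<Q}. f u = f w})"
    by (rule card_UN_le[OF fS])
  also have "\<dots> \<le> (\<Sum>w\<in>S. Q ^ (card D - 1))"
    by (rule sum_mono, rule card_bad_pair) (use assms in auto)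
  also have "\<dots> = card S * Q ^ (card D - 1)" by simp
  finally show ?thesis using eq by simp
qed

lemma selector_exists:
  fixes N \<Delta> a :: nat
  assumes D1: "\<Delta> \<ge> 1" and N1: "N \<ge> 1" and a: "N + 2 \<le> 2 ^ a"
  shows "\<exists>F::nat \<Rightarrow> nat \<Rightarrow> nat. (\<forall>j<(\<Delta>+1)*a. \<forall>u\<in>{1..N}. F j u < 2*\<Delta>) \<and>
     (\<forall>u\<in>{1..N}. \<forall>S. S \<subseteq> {1..N} \<longrightarrow> card S \<le> \<Delta> \<longrightarrow> u \<notin> S \<longrightarrow> (\<exists>j<(\<Delta>+1)*a. F j u \<notin> F j ` S))"
proof -
  define D where "D = {1..N}"
  define Q where "Q = 2*\<Delta>"
  define K where "K = (\<Delta>+1)*a"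
  define Fs where "Fs = D \<rightarrow>\<^sub>E {..<Q}"
  define TT where "TT = {..<K} \<rightarrow>\<^sub>E Fs"
  define Bad where "Bad = (\<lambda>(u,S). {f \<in> Fs. f u \<in> f ` S})"
  define Pairs where "Pairs = D \<times> {S. S \<subseteq> D \<and> card S \<le> \<Delta>}"
  define BT where "BT = (\<lambda>us. {..<K} \<rightarrow>\<^sub>E Bad us)"
  have fD: "finite D" and cD: "card D = N" by (auto simp: D_def)
  have fFs: "finite Fs" by (simp add: Fs_def finite_PiE fD)
  have cFs: "card Fs = Q ^ N" by (simp add: Fs_def card_PiE fD cD)
  have cTT: "card TT = (Q^N)^K" by (simp add: TT_def card_PiE cFs)
  have fTT: "finite TT" by (simp add: TT_def finite_PiE fFs)
  have cPairs: "card Pairs \<le> N * (N+1)^\<Delta>"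
    using card_small_sets[of N \<Delta>] by (simp add: Pairs_def card_cartesian_product cD D_def)
  have cBad: "card (Bad us) \<le> \<Delta> * Q^(N-1)" if "us \<in> Pairs" "fst us \<notin> snd us" for us
  proof -
    obtain u S where us: "us = (u,S)" by fastforce
    from that us have u: "u \<in> D" "S \<subseteq> D" "u \<notin> S" "card S \<le> \<Delta>" by (auto simp: Pairs_def)
    have "Bad us = {f \<in> D \<rightarrow>\<^sub>E {..<Q}. f u \<in> f ` S}" by (simp add: us Bad_def Fs_def)
    hence "card (Bad us) \<le> card S * Q ^ (card D - 1)" using card_bad[OF fD u(1,2,3)] by simp
    also have "\<dots> \<le> \<Delta> * Q^(N-1)" using u(4) cD by simp
    finally show ?thesis .
  qed
  have fBad: "finite (Bad us)" for us
    by (cases us) (auto simp: Bad_def intro: finite_subset[OF _ fFs])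
  have key: "2 * (\<Delta> * Q^(N-1)) = Q^N" using N1 by (cases N) (auto simp: Q_def)
  let ?P = "{us \<in> Pairs. fst us \<notin> snd us}"
  have fP: "finite Pairs" unfolding Pairs_def
    by (rule finite_cartesian_product) (auto simp: fD intro: finite_subset[of _ "Pow D"])
  have "card (\<Union>us\<in>?P. BT us) \<le> (\<Sum>us\<in>?P. card (BT us))"
    by (rule card_UN_le) (use fP in auto)
  also have "\<dots> \<le> (\<Sum>us\<in>?P. (\<Delta> * Q^(N-1))^K)"
  proof (rule sum_mono)
    fix us assume "us \<in> ?P"
    thus "card (BT us) \<le> (\<Delta> * Q^(N-1))^K"
      using cBad[of us] by (simp add: BT_def card_PiE power_mono)
  qed
  also have "\<dots> = card ?P * (\<Delta> * Q^(N-1))^K" by simp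
  also have "\<dots> \<le> N * (N+1)^\<Delta> * (\<Delta> * Q^(N-1))^K"
    by (rule mult_right_mono, rule order.trans[OF card_mono[OF fP] cPairs]) auto
  also have "\<dots> < (Q^N)^K"
  proof -
    have "N * (N+1)^\<Delta> < (N+1)^(\<Delta>+1)" by simp
    also have "\<dots> < (N+2)^(\<Delta>+1)" by (rule power_strict_mono) auto
    also have "\<dots> \<le> (2^a)^(\<Delta>+1)" by (rule power_mono[OF a]) simp
    also have "\<dots> = 2^K" by (simp add: K_def power_mult[symmetric] mult.commute power_add)
    finally have lt: "N * (N+1)^\<Delta> < 2^K" .
    have pos: "(\<Delta> * Q^(N-1))^K > 0" using D1 by (simp add: Q_def)
    have "N * (N+1)^\<Delta> * (\<Delta> * Q^(N-1))^K < 2^K * (\<Delta> * Q^(N-1))^K"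
      using lt pos by simp
    also have "\<dots> = (Q^N)^K" by (simp add: key[symmetric] power_mult_distrib)
    finally show ?thesis .
  qed
  finally have "card (\<Union>us\<in>?P. BT us) < card TT" using cTT by simp
  moreover have "finite (\<Union>us\<in>?P. BT us)"
    using fP by (auto simp: BT_def intro!: finite_PiE fBad)
  ultimately have "\<not> TT \<subseteq> (\<Union>us\<in>?P. BT us)"
    using card_mono[of "\<Union>us\<in>?P. BT us" TT] by linarith
  then obtain g where g: "g \<in> TT" "g \<notin> (\<Union>us\<in>?P. BT us)" by blast
  show ?thesis
  proof (intro exI[of _ g] conjI ballI allI impI)
    fix j u assume ju: "j < (\<Delta>+1)*a" "u \<in> {1..N}"
    have "g j \<in> Fs" using g(1) ju(1) unfolding TT_def K_def by (simp add: PiE_iff)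
    thus "g j u < 2*\<Delta>" using ju(2) unfolding Fs_def Q_def D_def by (simp add: PiE_iff)
  next
    fix u S assume u: "u \<in> {1..N}" and S: "S \<subseteq> {1..N}" "card S \<le> \<Delta>" "u \<notin> S"
    have "(u,S) \<in> ?P" using u S by (simp add: Pairs_def D_def)
    hence "g \<notin> BT (u,S)" using g by blast
    then obtain j where j: "j < K" "g j \<notin> Bad (u,S)"
      using g(1) unfolding BT_def TT_def by (auto simp: PiE_iff)
    have "g j \<in> Fs" using g(1) j(1) by (auto simp: TT_def)
    hence "g j u \<notin> g j ` S" using j(2) by (simp add: Bad_def)
    thus "\<exists>j<(\<Delta>+1)*a. g j u \<notin> g j ` S" using j(1) K_def by blast
  qed
qed

type_synonym trip = "nat \<times> nat \<times> bool list"

definition Trip :: "nat \<Rightarrow> nat \<Rightarrow> trip set" where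
  "Trip N B = {..N} \<times> {..N} \<times> {xs. length xs \<le> B}"

definition Adm :: "nat \<Rightarrow> nat \<Rightarrow> nat \<Rightarrow> trip set set" where
  "Adm N B M = {P. P \<subseteq> Trip N B \<and> card P \<le> M}"

lemma card_bool_lists_le: "card {xs::bool list. length xs \<le> B} < 2^(B+1)"
proof -
  have "card {xs::bool list. length xs \<le> B} = (\<Sum>i\<le>B. 2^i)"
    using card_lists_length_le[of "UNIV::bool set" B] by simp
  also have "(\<Sum>i\<le>B. (2::nat)^i) < 2^(B+1)" by (induction B) auto
  finally show ?thesis .
qed

lemma finite_bool_lists_le: "finite {xs::bool list. length xs \<le> B}"
  using finite_lists_length_le[of "UNIV::bool set" B] by simp

lemma finite_Trip: "finite (Trip N B)"
  by (simp add: Trip_def finite_bool_lists_le)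

lemma card_Trip: "card (Trip N B) < (N+1)*(N+1)*2^(B+1)"
proof -
  have "card (Trip N B) = (N+1)*((N+1)*card {xs::bool list. length xs \<le> B})"
    by (simp add: Trip_def card_cartesian_product)
  also have "\<dots> < (N+1)*((N+1)*2^(B+1))"
    using card_bool_lists_le[of B] by (intro mult_strict_left_mono) auto
  finally show ?thesis by (simp only: mult.assoc)
qed

lemma card_Trip_bits:
  assumes "N + 2 \<le> 2^a"
  shows "card (Trip N B) + 1 \<le> 2^(2*a+B+1)"
proof -
  have "(N+1)*(N+1)*2^(B+1) \<le> 2^a * 2^a * 2^(B+1)"
    using assms by (intro mult_mono) auto
  also have "\<dots> = 2^(a+a+(B+1))" by (simp only: power_add)
  also have "a+a+(B+1) = 2*a+B+1" by simp
  finally show ?thesis using card_Trip[of N B] by simp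
qed

lemma finite_Adm: "finite (Adm N B M)"
  by (rule finite_subset[of _ "Pow (Trip N B)"]) (auto simp: Adm_def finite_Trip)

lemma card_Adm: "card (Adm N B M) \<le> (card (Trip N B) + 1)^M"
proof -
  let ?A = "insert None (Some ` Trip N B)"
  let ?L = "{xs. set xs \<subseteq> ?A \<and> length xs = M}"
  have sub: "Adm N B M \<subseteq> (\<lambda>xs. {t. Some t \<in> set xs}) ` ?L"
  proof
    fix P assume P: "P \<in> Adm N B M"
    hence P1: "P \<subseteq> Trip N B" and P2: "card P \<le> M" by (simp_all add: Adm_def)
    have fP: "finite P" using P1 finite_Trip by (rule finite_subset)
    obtain ys where ys: "set ys = P" "distinct ys" using finite_distinct_list[OF fP] by blast
    have ly: "length ys = card P" using ys distinct_card by metis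
    define xs where "xs = map Some ys @ replicate (M - card P) None"
    have "set xs \<subseteq> ?A" unfolding xs_def using P1 ys(1) by (auto simp: set_replicate_conv_if)
    moreover have "length xs = M" unfolding xs_def using ly P2 by simp
    ultimately have "xs \<in> ?L" by simp
    moreover have "{t. Some t \<in> set xs} = P" unfolding xs_def using ys(1) by (auto simp: set_replicate_conv_if)
    ultimately show "P \<in> (\<lambda>xs. {t. Some t \<in> set xs}) ` ?L" by (intro image_eqI[of _ _ xs]) auto
  qed
  have fL: "finite ?L" by (rule finite_lists_length_eq) (simp add: finite_Trip)
  have "card (Adm N B M) \<le> card ((\<lambda>xs. {t. Some t \<in> set xs}) ` ?L)"
    by (rule card_mono[OF _ sub]) (simp add: fL)
  also have "\<dots> \<le> card ?L" by (rule card_image_le[OF fL])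
  also have "\<dots> = card ?A ^ M" by (rule card_lists_length_eq) (simp add: finite_Trip)
  also have "card ?A = card (Trip N B) + 1"
    by (simp add: card_image finite_Trip)
  finally show ?thesis .
qed

definition enc :: "nat \<Rightarrow> nat \<Rightarrow> nat \<Rightarrow> nat \<Rightarrow> trip set \<Rightarrow> bool list" where
  "enc N B M l = (SOME f. f ` Adm N B M \<subseteq> {xs. length xs = M*l} \<and> inj_on f (Adm N B M))"

definition dec :: "nat \<Rightarrow> nat \<Rightarrow> nat \<Rightarrow> nat \<Rightarrow> bool list \<Rightarrow> trip set" where
  "dec N B M l = inv_into (Adm N B M) (enc N B M l)"

lemma enc_props:
  assumes "card (Trip N B) + 1 \<le> 2^l"
  shows "enc N B M l ` Adm N B M \<subseteq> {xs. length xs = M*l} \<and> inj_on (enc N B M l) (Adm N B M)"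
proof -
  have fB: "finite {xs::bool list. length xs = M*l}"
    using finite_lists_length_eq[of "UNIV::bool set" "M*l"] by simp
  have cB: "card {xs::bool list. length xs = M*l} = 2^(M*l)"
    using card_lists_length_eq[of "UNIV::bool set" "M*l"] by simp
  have "card (Adm N B M) \<le> (2^l)^M"
    by (rule order.trans[OF card_Adm power_mono[OF assms]]) simp
  also have "\<dots> = 2^(M*l)" by (simp add: power_mult[symmetric] mult.commute)
  finally have cle: "card (Adm N B M) \<le> card {xs::bool list. length xs = M*l}" using cB by simp
  have "\<exists>f. f ` Adm N B M \<subseteq> {xs::bool list. length xs = M*l} \<and> inj_on f (Adm N B M)"
    using card_le_inj[OF finite_Adm fB cle] by assumption
  thus ?thesis unfolding enc_def by (rule someI_ex)
qed

lemma enc_len: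
  assumes "card (Trip N B) + 1 \<le> 2^l" "P \<in> Adm N B M"
  shows "length (enc N B M l P) = M*l"
proof -
  have "enc N B M l P \<in> {xs. length xs = M*l}"
    by (rule subsetD[OF conjunct1[OF enc_props[OF assms(1), of M]] imageI[OF assms(2)]])
  thus ?thesis by simp
qed

lemma dec_enc:
  assumes "card (Trip N B) + 1 \<le> 2^l" "P \<in> Adm N B M"
  shows "dec N B M l (enc N B M l P) = P"
  unfolding dec_def by (rule inv_into_f_f[OF conjunct2[OF enc_props[OF assms(1), of M]] assms(2)])

fun ball :: "(nat \<Rightarrow> nat \<Rightarrow> bool) \<Rightarrow> nat \<Rightarrow> nat \<Rightarrow> nat set" where
  "ball E w 0 = {w}"
| "ball E w (Suc t) = insert w (\<Union>u\<in>{u. E w u}. ball E u t)"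

lemma ball_self: "w \<in> ball E w t"
  by (cases t) auto

lemma ball_mono_Suc: "ball E w t \<subseteq> ball E w (Suc t)"
proof (induction t arbitrary: w)
  case 0 thus ?case by auto
next
  case (Suc t)
  show ?case using Suc.IH by (simp only: ball.simps) blast
qed

lemma ball_mono: "t \<le> t' \<Longrightarrow> ball E w t \<subseteq> ball E w t'"
proof (induction t' rule: dec_induct)
  case base thus ?case by simp
next
  case (step n) thus ?case using ball_mono_Suc[of E w n] by blast
qed

lemma ball_nbr: "E w u \<Longrightarrow> ball E u t \<subseteq> ball E w (Suc t)"
  by auto

lemma ug_E: "undirected_graph V E \<Longrightarrow> E x y \<Longrightarrow> x \<in> V \<and> y \<in> V \<and> x \<noteq> y \<and> E y x"
  unfolding undirected_graph_def by blast

lemma ball_V: "undirected_graph V E \<Longrightarrow> w \<in> V \<Longrightarrow> ball E w t \<subseteq> V"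
proof (induction t arbitrary: w)
  case 0 thus ?case by simp
next
  case (Suc t)
  have "ball E u t \<subseteq> V" if "E w u" for u using Suc.IH[OF Suc.prems(1)] ug_E[OF Suc.prems(1) that] by blast
  thus ?case using Suc.prems by auto
qed

lemma finite_nbrs: "undirected_graph V E \<Longrightarrow> finite {u. E w u}"
  unfolding undirected_graph_def by (rule finite_subset[of _ V]) auto

lemma finite_ball: "undirected_graph V E \<Longrightarrow> w \<in> V \<Longrightarrow> finite (ball E w t)"
  using ball_V[of V E w t] unfolding undirected_graph_def by (blast intro: finite_subset)

lemma ball_deg1:
  assumes ug: "undirected_graph V E" and deg: "\<forall>v\<in>V. degree E v \<le> 1" and w: "w \<in> V"
  shows "ball E w t \<subseteq> insert w {u. E w u}"
  using w
proof (induction t arbitrary: w)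
  case 0 thus ?case by simp
next
  case (Suc t)
  have "ball E u t \<subseteq> insert w {u. E w u}" if u: "E w u" for u
  proof -
    have uV: "u \<in> V" and uw: "E u w" using ug_E[OF ug u] by auto
    have "degree E u \<le> 1" using deg uV by blast
    hence c: "card {x. E u x} \<le> 1" by (simp add: degree_def)
    have "{x. E u x} \<subseteq> {w}"
    proof
      fix x assume x: "x \<in> {x. E u x}"
      have "w \<in> {x. E u x}" using uw by simp
      thus "x \<in> {w}" using card_le_Suc0_iff_eq[OF finite_nbrs[OF ug, of u]] c x by auto
    qed
    hence "ball E u t \<subseteq> insert u {w}" using Suc.IH[OF uV] by blast
    thus ?thesis using u by blast
  qed
  thus ?case by auto
qed

lemma card_ball:
  assumes ug: "undirected_graph V E" and deg: "\<forall>v\<in>V. degree E v \<le> \<Delta>" and D1: "\<Delta> \<ge> 1" and w: "w \<in> V"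
  shows "card (ball E w t) \<le> 2 * \<Delta>^t"
proof (cases "\<Delta> = 1")
  case True
  have "card (ball E w t) \<le> card (insert w {u. E w u})"
    by (rule card_mono) (use ball_deg1[OF ug _ w] deg True finite_nbrs[OF ug] in auto)
  also have "\<dots> \<le> Suc (card {u. E w u})" by (simp add: card_insert_if finite_nbrs[OF ug])
  also have "card {u. E w u} \<le> 1" using deg w True by (simp add: degree_def)
  finally show ?thesis using True by simp
next
  case False
  hence D2: "\<Delta> \<ge> 2" using D1 by simp
  have "card (ball E w t) + 1 \<le> 2 * \<Delta>^t" using w
  proof (induction t arbitrary: w)
    case 0 thus ?case by simp
  next
    case (Suc t)
    let ?N = "{u. E w u}"
    have fN: "finite ?N" by (rule finite_nbrs[OF ug])
    have cN: "card ?N \<le> \<Delta>" using deg Suc.prems by (simp add: degree_def)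
    have fU: "finite (\<Union>u\<in>?N. ball E u t)"
      using fN finite_ball[OF ug] ug_E[OF ug] by blast
    have "card (ball E w (Suc t)) \<le> card (\<Union>u\<in>?N. ball E u t) + 1"
      by (simp add: card_insert_if fU)
    also have "card (\<Union>u\<in>?N. ball E u t) \<le> (\<Sum>u\<in>?N. card (ball E u t))"
      by (rule card_UN_le[OF fN])
    also have "\<dots> \<le> (\<Sum>u\<in>?N. 2 * \<Delta>^t - 1)"
    proof (rule sum_mono)
      fix u assume "u \<in> ?N"
      hence "u \<in> V" using ug_E[OF ug] by blast
      thus "card (ball E u t) \<le> 2 * \<Delta>^t - 1" using Suc.IH by fastforce
    qed
    also have "\<dots> = card ?N * (2 * \<Delta>^t - 1)" by simp
    also have "\<dots> \<le> \<Delta> * (2 * \<Delta>^t - 1)" by (rule mult_right_mono[OF cN]) simp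
    finally have "card (ball E w (Suc t)) \<le> \<Delta> * (2 * \<Delta>^t - 1) + 1" by simp
    moreover have "\<Delta> * (2 * \<Delta>^t - 1) + 1 + 1 \<le> 2 * \<Delta>^(Suc t)"
    proof -
      have p: "\<Delta>^t \<ge> 1" using D1 by simp
      have "\<Delta> * (2 * \<Delta>^t - 1) = 2 * \<Delta>^(Suc t) - \<Delta>" by (simp add: right_diff_distrib')
      moreover have "2 * \<Delta>^(Suc t) \<ge> 2 * \<Delta>" using p by simp
      ultimately show ?thesis using D2 by linarith
    qed
    ultimately show ?case by simp
  qed
  thus ?thesis by simp
qed

lemma relpow_ball:
  assumes ug: "undirected_graph V E"
  shows "(x, y) \<in> {(a, b). E a b} ^^ k \<Longrightarrow> x \<in> ball E y k"
proof (induction k arbitrary: y)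
  case 0 thus ?case by simp
next
  case (Suc k)
  from Suc.prems obtain z where xz: "(x, z) \<in> {(a, b). E a b} ^^ k" and zy: "E z y"
    by (auto elim: relpow_Suc_E)
  have "x \<in> ball E z k" by (rule Suc.IH[OF xz])
  moreover have "E y z" using ug_E[OF ug zy] by simp
  ultimately show ?case using ball_nbr[of E y z k] by blast
qed

lemma within_ball:
  assumes "undirected_graph V E" "within_hops E h u v"
  shows "u \<in> ball E v h"
proof -
  obtain k where k: "k \<le> h" "(u, v) \<in> {(x, y). E x y} ^^ k" using assms(2) by (auto simp: within_hops_def)
  show ?thesis using relpow_ball[OF assms(1) k(2)] ball_mono[OF k(1)] by blast
qed

definition kn :: "(nat \<Rightarrow> nat \<Rightarrow> bool) \<Rightarrow> (nat \<Rightarrow> nat \<Rightarrow> bool list option) \<Rightarrow> nat \<Rightarrow> nat \<Rightarrow> nat \<Rightarrow> trip set" where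
  "kn E m h w i = {(s,d,x). s \<in> ball E w i \<and> d \<in> ball E w (h - i) \<and> m s d = Some x}"

lemma kn_Suc:
  assumes ug: "undirected_graph V E" and i: "i < h"
  shows "kn E m h v (Suc i) = {t \<in> kn E m h v i \<union> (\<Union>u\<in>{u. E v u}. kn E m h u i). fst (snd t) \<in> ball E v (h - Suc i)}"
proof -
  have hi: "h - i = Suc (h - Suc i)" using i by simp
  show ?thesis
  proof (intro set_eqI iffI)
    fix t assume t: "t \<in> kn E m h v (Suc i)"
    obtain s d x where t_def: "t = (s,d,x)" by (cases t) auto
    from t have s: "s \<in> ball E v (Suc i)" and d: "d \<in> ball E v (h - Suc i)" and mx: "m s d = Some x"
      by (auto simp: kn_def t_def)
    have dv: "d \<in> ball E v (h - i)" using d ball_mono_Suc[of E v "h - Suc i"] hi by auto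
    show "t \<in> {t \<in> kn E m h v i \<union> (\<Union>u\<in>{u. E v u}. kn E m h u i). fst (snd t) \<in> ball E v (h - Suc i)}"
    proof (cases "s \<in> ball E v i")
      case True thus ?thesis using dv d mx by (auto simp: kn_def t_def)
    next
      case False
      hence "s \<noteq> v" using ball_self by metis
      with s obtain u where u: "E v u" "s \<in> ball E u i" by auto
      have "E u v" using ug_E[OF ug u(1)] by simp
      hence "d \<in> ball E u (h - i)" using ball_nbr[of E u v "h - Suc i"] d hi by auto
      thus ?thesis using u d mx by (auto simp: kn_def t_def)
    qed
  next
    fix t assume t: "t \<in> {t \<in> kn E m h v i \<union> (\<Union>u\<in>{u. E v u}. kn E m h u i). fst (snd t) \<in> ball E v (h - Suc i)}"
    obtain s d x where t_def: "t = (s,d,x)" by (cases t) auto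
    from t have d: "d \<in> ball E v (h - Suc i)" by (simp add: t_def)
    from t have "(s \<in> ball E v i \<and> m s d = Some x) \<or> (\<exists>u. E v u \<and> s \<in> ball E u i \<and> m s d = Some x)"
      by (auto simp: kn_def t_def)
    moreover have "s \<in> ball E v (Suc i)" if "s \<in> ball E v i" using that ball_mono_Suc by blast
    moreover have "s \<in> ball E v (Suc i)" if "E v u" "s \<in> ball E u i" for u
      using that ball_nbr[of E v u i] by blast
    ultimately show "t \<in> kn E m h v (Suc i)" using d by (auto simp: kn_def t_def)
  qed
qed

lemma card_kn:
  assumes ug: "undirected_graph V E" and w: "w \<in> V"
  shows "finite (kn E m h w i) \<and> card (kn E m h w i) \<le> card (ball E w i) * card (ball E w (h - i))"
proof -
  have inj: "inj_on (\<lambda>(s,d,x). (s,d)) (kn E m h w i)"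
    by (rule inj_onI) (auto simp: kn_def)
  have img: "(\<lambda>(s,d,x). (s,d)) ` kn E m h w i \<subseteq> ball E w i \<times> ball E w (h - i)"
    by (auto simp: kn_def)
  have fin: "finite (ball E w i \<times> ball E w (h - i))"
    using finite_ball[OF ug w] by simp
  have "finite (kn E m h w i)" by (rule inj_on_finite[OF inj img fin])
  moreover have "card (kn E m h w i) \<le> card (ball E w i \<times> ball E w (h - i))"
    by (rule card_inj_on_le[OF inj img fin])
  ultimately show ?thesis by (simp add: card_cartesian_product)
qed

section \<open>Parameters\<close>

definition pN :: "params \<Rightarrow> nat" where "pN p = nat \<lfloor>real (fst p) powr (fst (snd p))\<rfloor>"
definition pD :: "params \<Rightarrow> nat" where "pD p = fst (snd (snd p))"
definition pH :: "params \<Rightarrow> nat" where "pH p = fst (snd (snd (snd p)))"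
definition pB :: "params \<Rightarrow> nat" where "pB p = snd (snd (snd (snd p)))"
definition pa :: "params \<Rightarrow> nat" where "pa p = nat \<lceil>log 2 (real (pN p) + 2)\<rceil>"
definition pK :: "params \<Rightarrow> nat" where "pK p = (pD p + 1) * pa p"
definition pQ :: "params \<Rightarrow> nat" where "pQ p = 2 * pD p"
definition pR :: "params \<Rightarrow> nat" where "pR p = pK p * pQ p"
definition pM :: "params \<Rightarrow> nat" where "pM p = 4 * pD p ^ pH p"
definition pl :: "params \<Rightarrow> nat" where "pl p = 2 * pa p + pB p + 1"
definition pL :: "params \<Rightarrow> nat" where "pL p = pM p * pl p"
definition pW :: "params \<Rightarrow> nat" where "pW p = 2 * pL p"
definition pS :: "params \<Rightarrow> nat" where "pS p = pR p * pW p"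

definition selprop :: "nat \<Rightarrow> nat \<Rightarrow> nat \<Rightarrow> nat \<Rightarrow> (nat \<Rightarrow> nat \<Rightarrow> nat) \<Rightarrow> bool" where
  "selprop N D K Q F \<longleftrightarrow> (\<forall>j<K. \<forall>u\<in>{1..N}. F j u < Q) \<and>
     (\<forall>u\<in>{1..N}. \<forall>S. S \<subseteq> {1..N} \<longrightarrow> card S \<le> D \<longrightarrow> u \<notin> S \<longrightarrow> (\<exists>j<K. F j u \<notin> F j ` S))"

definition selF :: "params \<Rightarrow> nat \<Rightarrow> nat \<Rightarrow> nat" where
  "selF p = (SOME F. selprop (pN p) (pD p) (pK p) (pQ p) F)"

definition sel :: "params \<Rightarrow> nat \<Rightarrow> nat \<Rightarrow> bool" where
  "sel p s u \<longleftrightarrow> selF p (s div pQ p) u = s mod pQ p"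

definition penc :: "params \<Rightarrow> trip set \<Rightarrow> bool list" where
  "penc p = enc (pN p) (pB p) (pM p) (pl p)"
definition pdec :: "params \<Rightarrow> bool list \<Rightarrow> trip set" where
  "pdec p = dec (pN p) (pB p) (pM p) (pl p)"

section \<open>Local computation\<close>

definition valid :: "nat \<Rightarrow> (nat \<Rightarrow> bool) \<Rightarrow> nat \<Rightarrow> bool" where
  "valid L H b \<longleftrightarrow> (\<forall>k<L. H (b + 2*k) \<noteq> H (b + 2*k + 1))"

definition decode :: "nat \<Rightarrow> (nat \<Rightarrow> bool) \<Rightarrow> nat \<Rightarrow> bool list" where
  "decode L H b = map (\<lambda>k. H (b + 2*k)) [0..<L]"

definition cbit :: "bool list \<Rightarrow> nat \<Rightarrow> bool" where
  "cbit xs i = (if even i then xs ! (i div 2) else \<not> xs ! (i div 2))"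

definition rcv :: "params \<Rightarrow> nat \<Rightarrow> (nat \<Rightarrow> bool) \<Rightarrow> nat \<Rightarrow> trip set set" where
  "rcv p v H j = (\<lambda>s. pdec p (decode (pL p) H (j * pS p + s * pW p))) `
     {s. s < pR p \<and> \<not> sel p s v \<and> valid (pL p) H (j * pS p + s * pW p)}"

fun lball :: "params \<Rightarrow> nat \<Rightarrow> (nat \<Rightarrow> bool) \<Rightarrow> nat \<Rightarrow> nat set" where
  "lball p v H 0 = {v}"
| "lball p v H (Suc t) = insert v (\<Union>P\<in>rcv p v H t. fst ` P)"

fun lkn :: "params \<Rightarrow> nat \<Rightarrow> (nat \<Rightarrow> bool list option) \<Rightarrow> (nat \<Rightarrow> bool) \<Rightarrow> nat \<Rightarrow> trip set" where
  "lkn p v mv H 0 = {(s,d,x). s = v \<and> d \<in> lball p v H (pH p) \<and> mv d = Some x}"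
| "lkn p v mv H (Suc i) = {t \<in> lkn p v mv H i \<union> \<Union>(rcv p v H (pH p + i)). fst (snd t) \<in> lball p v H (pH p - Suc i)}"

definition payload :: "params \<Rightarrow> nat \<Rightarrow> (nat \<Rightarrow> bool list option) \<Rightarrow> (nat \<Rightarrow> bool) \<Rightarrow> nat \<Rightarrow> trip set" where
  "payload p v mv H j = (if j < pH p then (\<lambda>x. (x, 0, [])) ` lball p v H j else lkn p v mv H (j - pH p))"

definition myact :: beep_rule where
  "myact p v mv Hl = (let r = length Hl; j = r div pS p; s = (r mod pS p) div pW p; i = (r mod pS p) mod pW p in
     j < 2 * pH p \<and> sel p s v \<and> cbit (penc p (payload p v mv (\<lambda>k. Hl ! k) j)) i)"

definition myout :: output_rule where
  "myout p v mv Hl u = (let K = lkn p v mv (\<lambda>k. Hl ! k) (pH p) in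
     if (\<exists>x. (u, v, x) \<in> K) then Some (SOME x. (u, v, x) \<in> K) else None)"

definition myT :: "params \<Rightarrow> nat" where
  "myT p = (if fst p = 0 \<or> pD p = 0 \<or> pH p = 0 then 0 else 2 * pH p * pS p)"

section \<open>Congruence\<close>

lemma slot_bound:
  fixes s R W i :: nat
  assumes "s < R" "i < W"
  shows "s * W + i < R * W"
proof -
  have "s * W + i < s * W + W" using assms by simp
  also have "\<dots> = Suc s * W" by simp
  also have "\<dots> \<le> R * W" using assms by (intro mult_right_mono) auto
  finally show ?thesis .
qed

lemma rcv_cong:
  assumes "\<forall>k < Suc j * pS p. H k = H' k"
  shows "rcv p v H j = rcv p v H' j"
proof -
  have eq: "H (j * pS p + s * pW p + i) = H' (j * pS p + s * pW p + i)" if "s < pR p" "i < pW p" for s i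
  proof -
    have "s * pW p + i < pS p" using slot_bound[OF that] by (simp add: pS_def)
    hence "j * pS p + s * pW p + i < Suc j * pS p" by simp
    thus ?thesis using assms by simp
  qed
  have v: "valid (pL p) H (j * pS p + s * pW p) = valid (pL p) H' (j * pS p + s * pW p)"
   and d: "decode (pL p) H (j * pS p + s * pW p) = decode (pL p) H' (j * pS p + s * pW p)"
    if "s < pR p" for s
  proof -
    have e1: "H (j * pS p + s * pW p + 2*k) = H' (j * pS p + s * pW p + 2*k)" if "k < pL p" for k
      using eq[OF \<open>s < pR p\<close>, of "2*k"] that by (simp add: pW_def)
    have e2: "H (j * pS p + s * pW p + 2*k + 1) = H' (j * pS p + s * pW p + 2*k + 1)" if "k < pL p" for k
      using eq[OF \<open>s < pR p\<close>, of "2*k+1"] that by (simp add: pW_def add.assoc)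
    show "valid (pL p) H (j * pS p + s * pW p) = valid (pL p) H' (j * pS p + s * pW p)"
      unfolding valid_def using e1 e2 by auto
    show "decode (pL p) H (j * pS p + s * pW p) = decode (pL p) H' (j * pS p + s * pW p)"
      unfolding decode_def using e1 by simp
  qed
  have "{s. s < pR p \<and> \<not> sel p s v \<and> valid (pL p) H (j * pS p + s * pW p)} =
        {s. s < pR p \<and> \<not> sel p s v \<and> valid (pL p) H' (j * pS p + s * pW p)}"
    using v by blast
  thus ?thesis unfolding rcv_def using d by (auto intro!: image_cong)
qed

lemma lball_cong:
  "\<forall>k < t * pS p. H k = H' k \<Longrightarrow> lball p v H t = lball p v H' t"
proof (induction t)
  case 0 thus ?case by simp
next
  case (Suc t)
  have "\<forall>k < t * pS p. H k = H' k" using Suc.prems by auto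
  moreover have "rcv p v H t = rcv p v H' t" by (rule rcv_cong) (use Suc.prems in simp)
  ultimately show ?case by simp
qed

lemma lkn_cong:
  "\<forall>k < (pH p + i) * pS p. H k = H' k \<Longrightarrow> lkn p v mv H i = lkn p v mv H' i"
proof (induction i)
  case 0
  have "lball p v H (pH p) = lball p v H' (pH p)" by (rule lball_cong) (use 0 in simp)
  thus ?case by simp
next
  case (Suc i)
  have a: "\<forall>k < (pH p + i) * pS p. H k = H' k" using Suc.prems
    by (meson add_le_mono le_add1 less_le_trans mult_le_mono1 Suc_n_not_le_n nat_le_linear add_Suc_right not_less_eq_eq)
  have b: "rcv p v H (pH p + i) = rcv p v H' (pH p + i)" by (rule rcv_cong) (use Suc.prems in simp)
  have c: "lball p v H (pH p - Suc i) = lball p v H' (pH p - Suc i)"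
  proof (rule lball_cong, intro allI impI)
    fix k assume "k < (pH p - Suc i) * pS p"
    moreover have "(pH p - Suc i) * pS p \<le> (pH p + Suc i) * pS p" by (rule mult_right_mono) auto
    ultimately show "H k = H' k" using Suc.prems by auto
  qed
  show ?case using Suc.IH[OF a] b c by simp
qed

lemma payload_cong:
  assumes "\<forall>k < j * pS p. H k = H' k"
  shows "payload p v mv H j = payload p v mv H' j"
proof (cases "j < pH p")
  case True thus ?thesis using lball_cong[OF assms] by (simp add: payload_def)
next
  case False
  hence "pH p + (j - pH p) = j" by simp
  thus ?thesis using lkn_cong[of p "j - pH p" H H' v mv] assms False by (simp add: payload_def)
qed

lemma exec_len: "length (exec A E r v) = r"
  by (induction r arbitrary: v) auto

lemma exec_nth: "k < r \<Longrightarrow> exec A E r v ! k = exec A E (Suc k) v ! k"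
proof (induction r)
  case 0 thus ?case by simp
next
  case (Suc r)
  show ?case
  proof (cases "k < r")
    case True
    hence "exec A E (Suc r) v ! k = exec A E r v ! k" by (simp add: nth_append exec_len)
    thus ?thesis using Suc.IH True by simp
  next
    case False
    hence "k = r" using Suc.prems by simp
    thus ?thesis by simp
  qed
qed

lemma exec_last: "exec A E (Suc r) v ! r = (\<not> A v (exec A E r v) \<and> (\<exists>w. E v w \<and> A w (exec A E r w)))"
  by (simp add: nth_append exec_len)

lemma decomp:
  fixes R W s i j :: nat
  assumes "s < R" "i < W"
  shows "(j*(R*W) + s*W + i) div (R*W) = j \<and> ((j*(R*W) + s*W + i) mod (R*W)) div W = s
       \<and> ((j*(R*W) + s*W + i) mod (R*W)) mod W = i"
proof -
  have x: "s*W + i < R*W" by (rule slot_bound[OF assms])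
  have e: "j*(R*W) + s*W + i = (s*W + i) + (R*W)*j" by simp
  have nz: "R*W \<noteq> 0" using x by linarith
  have "(j*(R*W) + s*W + i) div (R*W) = j" unfolding e
    by (simp only: div_mult_self2[OF nz]) (use x in simp)
  moreover have "(j*(R*W) + s*W + i) mod (R*W) = s*W + i" unfolding e
    by (simp only: mod_mult_self2) (use x in simp)
  moreover have "(s*W + i) div W = s" using assms by simp
  moreover have "(s*W + i) mod W = i" using assms by simp
  ultimately show ?thesis by simp
qed

lemma cbit_even: "cbit xs (2*k) = xs ! k"
  by (simp add: cbit_def)
lemma cbit_odd: "cbit xs (2*k+1) = (\<not> xs ! k)"
  by (simp add: cbit_def)
lemma cbit_odd': "cbit xs (Suc (2*k)) = (\<not> xs ! k)"
  by (simp add: cbit_def)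

lemma or_code_valid:
  assumes len: "\<forall>w\<in>A. length (c w) = L" and L: "L \<ge> 1"
    and H: "\<forall>i<2*L. H (b+i) = (\<exists>w\<in>A. cbit (c w) i)"
    and val: "valid L H b"
  shows "\<exists>w\<in>A. decode L H b = c w"
proof -
  have "H (b + 2*0) \<noteq> H (b + 2*0 + 1)" using spec[OF val[unfolded valid_def], of 0] L by simp
  hence hb: "H (b+0) \<or> H (b+1)" by simp
  have i0: "0 < 2*L" and i1: "1 < 2*L" using L by auto
  have "\<exists>w\<in>A. True"
  proof (cases "H (b+0)")
    case True thus ?thesis using H[rule_format, OF i0] by blast
  next
    case False thus ?thesis using hb H[rule_format, OF i1] by blast
  qed
  then obtain w where w: "w \<in> A" by blast
  have alleq: "c w' = c w" if w': "w' \<in> A" for w'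
  proof (rule nth_equalityI)
    show "length (c w') = length (c w)" using len w w' by simp
    fix k assume k: "k < length (c w')"
    hence kL: "k < L" using len w' by simp
    show "c w' ! k = c w ! k"
    proof (rule ccontr)
      assume ne: "c w' ! k \<noteq> c w ! k"
      have i1: "2*k < 2*L" and i2: "2*k+1 < 2*L" using kL by auto
      have h1: "H (b + 2*k) = (\<exists>w''\<in>A. c w'' ! k)" using H[rule_format, OF i1] by (simp add: cbit_even)
      have h2: "H (b + 2*k + 1) = (\<exists>w''\<in>A. \<not> c w'' ! k)" using H[rule_format, OF i2] by (simp add: cbit_odd')
      have ex: "(\<exists>w''\<in>A. c w'' ! k) \<and> (\<exists>w''\<in>A. \<not> c w'' ! k)"
        by (cases "c w ! k") (use w w' ne in blast)+
      have "H (b + 2*k) \<noteq> H (b + 2*k + 1)" using spec[OF val[unfolded valid_def], of k] kL by simp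
      thus False using h1 h2 ex by simp
    qed
  qed
  have "decode L H b = c w"
  proof -
    have "H (b + 2*k) = c w ! k" if "k < L" for k
    proof -
      have "2*k < 2*L" using that by simp
      hence "H (b + 2*k) = (\<exists>w'\<in>A. c w' ! k)" using H by (simp add: cbit_even)
      also have "\<dots> = c w ! k"
      proof
        assume "\<exists>w'\<in>A. c w' ! k"
        then obtain w' where "w' \<in> A" "c w' ! k" by blast
        thus "c w ! k" using alleq[of w'] by simp
      next
        assume "c w ! k" thus "\<exists>w'\<in>A. c w' ! k" using w by blast
      qed
      finally show ?thesis .
    qed
    hence "decode L H b = map (\<lambda>k. c w ! k) [0..<L]" unfolding decode_def by simp
    also have "\<dots> = c w"
    proof -
      have "length (c w) = L" using len w by blast
      thus ?thesis using map_nth[of "c w"] by simp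
    qed
    finally show ?thesis .
  qed
  thus ?thesis using w by blast
qed

lemma single_code:
  assumes len: "length cu = L"
    and H: "\<forall>i<2*L. H (b+i) = cbit cu i"
  shows "valid L H b \<and> decode L H b = cu"
proof
  show "valid L H b" unfolding valid_def
  proof (intro allI impI)
    fix k assume "k < L"
    hence "2*k < 2*L" "2*k+1 < 2*L" by auto
    hence a: "H (b + 2*k) = cu ! k" and c: "H (b + (2*k+1)) = (\<not> cu ! k)"
      using H[rule_format, of "2*k"] H[rule_format, of "2*k+1"] by (simp_all add: cbit_even cbit_odd')
    have "b + 2*k + 1 = b + (2*k+1)" by simp
    thus "H (b + 2*k) \<noteq> H (b + 2*k + 1)" using a c by simp
  qed
  have "H (b + 2*k) = cu ! k" if "k < L" for k
  proof -
    have "2*k < 2*L" using that by simp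
    thus ?thesis using H[rule_format, of "2*k"] by (simp add: cbit_even)
  qed
  hence "decode L H b = map (\<lambda>k. cu ! k) [0..<L]" unfolding decode_def by simp
  also have "\<dots> = cu" using len map_nth[of cu] by simp
  finally show "decode L H b = cu" .
qed

lemma pow_ceil_log:
  fixes x :: real
  assumes "x \<ge> 1"
  shows "x \<le> 2 ^ nat \<lceil>log 2 x\<rceil>"
proof -
  have l0: "log 2 x \<ge> 0" using assms by simp
  have "x = 2 powr (log 2 x)" using assms by simp
  also have "\<dots> \<le> 2 powr (real (nat \<lceil>log 2 x\<rceil>))"
    by (rule powr_mono) (use l0 in \<open>auto intro: order.trans[OF le_of_int_ceiling]\<close>)
  also have "\<dots> = 2 ^ nat \<lceil>log 2 x\<rceil>" by (simp add: powr_realpow)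
  finally show ?thesis .
qed

locale setting =
  fixes n :: nat and c :: real and \<Delta> h B :: nat and V :: "nat set"
    and E :: "nat \<Rightarrow> nat \<Rightarrow> bool" and m :: "nat \<Rightarrow> nat \<Rightarrow> bool list option"
  assumes ug: "undirected_graph V E" and cardV: "card V = n"
    and Vsub: "V \<subseteq> {1..nat \<lfloor>real n powr c\<rfloor>}"
    and maxdeg: "max_degree_is V E \<Delta>" and B1: "B \<ge> 1"
    and mlen: "\<forall>u v x. m u v = Some x \<longrightarrow> length x \<le> B"
    and n0: "n \<noteq> 0" and D1: "\<Delta> \<ge> 1" and h1: "h \<ge> 1"
begin

abbreviation pp :: params where "pp \<equiv> (n, c, \<Delta>, h, B)"

lemma pvals: "pN pp = nat \<lfloor>real n powr c\<rfloor>" "pD pp = \<Delta>" "pH pp = h" "pB pp = B"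
  by (simp_all add: pN_def pD_def pH_def pB_def)

lemma V_N: "V \<subseteq> {1..pN pp}" using Vsub by (simp add: pvals)

lemma deg: "\<forall>v\<in>V. degree E v \<le> \<Delta>" using maxdeg by (simp add: max_degree_is_def)

lemma N1: "pN pp \<ge> 1"
proof -
  have "V \<noteq> {}" using cardV n0 by auto
  then obtain v where "v \<in> V" by blast
  thus ?thesis using V_N by auto
qed

lemma a_ok: "pN pp + 2 \<le> 2 ^ pa pp"
proof -
  have "real (pN pp) + 2 \<le> 2 ^ nat \<lceil>log 2 (real (pN pp) + 2)\<rceil>"
    by (rule pow_ceil_log) simp
  hence "real (pN pp + 2) \<le> real (2 ^ pa pp)" by (simp add: pa_def)
  thus ?thesis by (simp only: of_nat_le_iff)
qed

lemma a1: "pa pp \<ge> 1"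
proof (rule ccontr)
  assume "\<not> pa pp \<ge> 1"
  hence "pa pp = 0" by simp
  thus False using a_ok by simp
qed

lemma sel_ok: "selprop (pN pp) \<Delta> (pK pp) (pQ pp) (selF pp)"
proof -
  have "\<exists>F. selprop (pN pp) \<Delta> (pK pp) (pQ pp) F"
    using selector_exists[OF D1 N1 a_ok] unfolding selprop_def pK_def pQ_def pvals by blast
  thus ?thesis unfolding selF_def pvals by (rule someI_ex)
qed

lemma trip_bits: "card (Trip (pN pp) (pB pp)) + 1 \<le> 2 ^ pl pp"
  using card_Trip_bits[OF a_ok, of "pB pp"] by (simp add: pl_def)

lemma pos: "pQ pp > 0" "pK pp > 0" "pR pp > 0" "pL pp \<ge> 1" "pW pp > 0" "pS pp > 0"
proof -
  show q: "pQ pp > 0" using D1 by (simp add: pQ_def pvals)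
  show k: "pK pp > 0" using a1 by (simp add: pK_def)
  show r: "pR pp > 0" using q k by (simp add: pR_def)
  have "pM pp > 0" using D1 by (simp add: pM_def pvals)
  moreover have "pl pp > 0" by (simp add: pl_def)
  ultimately show l: "pL pp \<ge> 1" by (simp add: pL_def)
  show w: "pW pp > 0" using l by (simp add: pW_def)
  show "pS pp > 0" using r w by (simp add: pS_def)
qed

abbreviation X :: "nat \<Rightarrow> nat \<Rightarrow> bool list" where
  "X \<equiv> exec (\<lambda>v. myact pp v (m v)) E"

definition hf :: "nat \<Rightarrow> nat \<Rightarrow> bool" where
  "hf v k = X (Suc k) v ! k"

definition ipay :: "nat \<Rightarrow> nat \<Rightarrow> trip set" where
  "ipay j w = (if j < h then (\<lambda>x. (x, 0, [])) ` ball E w j else kn E m h w (j - h))"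

lemma ipay_Adm:
  assumes w: "w \<in> V" and j: "j < 2*h"
  shows "ipay j w \<in> Adm (pN pp) (pB pp) (pM pp)"
proof (cases "j < h")
  case True
  have bV: "ball E w j \<subseteq> {1..pN pp}" using ball_V[OF ug w] V_N by blast
  have sub: "ipay j w \<subseteq> Trip (pN pp) (pB pp)" using bV True by (auto simp: ipay_def Trip_def)
  have "card (ipay j w) \<le> card (ball E w j)" using True by (simp add: ipay_def card_image_le finite_ball[OF ug w])
  also have "\<dots> \<le> 2 * \<Delta>^j" by (rule card_ball[OF ug deg D1 w])
  also have "\<dots> \<le> 2 * \<Delta>^h" using D1 True by (simp add: power_increasing)
  also have "\<dots> \<le> pM pp" by (simp add: pM_def pvals)
  finally show ?thesis using sub by (simp add: Adm_def)
next
  case False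
  define i where "i = j - h"
  have ih: "i \<le> h" using j False by (simp add: i_def)
  have ip: "ipay j w = kn E m h w i" using False by (simp add: ipay_def i_def)
  have bV: "ball E w t \<subseteq> {1..pN pp}" for t using ball_V[OF ug w] V_N by blast
  have sub: "kn E m h w i \<subseteq> Trip (pN pp) (pB pp)"
  proof
    fix t assume t: "t \<in> kn E m h w i"
    obtain s d x where tt: "t = (s, d, x)" by (cases t) auto
    have "s \<in> ball E w i" "d \<in> ball E w (h - i)" "m s d = Some x" using t by (auto simp: kn_def tt)
    thus "t \<in> Trip (pN pp) (pB pp)" using bV[of i] bV[of "h - i"] mlen by (auto simp: Trip_def tt pvals)
  qed
  have "card (kn E m h w i) \<le> card (ball E w i) * card (ball E w (h - i))"
    using card_kn[OF ug w] by blast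
  also have "\<dots> \<le> (2 * \<Delta>^i) * (2 * \<Delta>^(h - i))"
    by (intro mult_mono card_ball[OF ug deg D1 w]) auto
  also have "\<dots> = 4 * \<Delta>^h" using ih by (simp add: power_add[symmetric])
  also have "\<dots> = pM pp" by (simp add: pM_def pvals)
  finally show ?thesis using sub ip by (simp add: Adm_def)
qed

lemma heard: "hf v r = (\<not> myact pp v (m v) (X r v) \<and> (\<exists>w. E v w \<and> myact pp w (m w) (X r w)))"
  unfolding hf_def by (rule exec_last)

lemma beep:
  assumes s: "s < pR pp" and i: "i < pW pp" and j: "j < 2*h"
  shows "myact pp v (m v) (X (j * pS pp + s * pW pp + i) v) = (sel pp s v \<and> cbit (penc pp (payload pp v (m v) (hf v) j)) i)"
proof -
  define r where "r = j * pS pp + s * pW pp + i"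
  have len: "length (X r v) = r" by (rule exec_len)
  have dc: "r div pS pp = j \<and> (r mod pS pp) div pW pp = s \<and> (r mod pS pp) mod pW pp = i"
    using decomp[OF s i, of j] by (simp add: r_def pS_def)
  have "\<forall>k < j * pS pp. X r v ! k = hf v k"
  proof (intro allI impI)
    fix k assume "k < j * pS pp"
    hence "k < r" by (simp add: r_def)
    thus "X r v ! k = hf v k" by (simp add: hf_def exec_nth)
  qed
  hence pc: "payload pp v (m v) (\<lambda>k. X r v ! k) j = payload pp v (m v) (hf v) j"
    by (rule payload_cong)
  show ?thesis unfolding r_def[symmetric] myact_def Let_def len dc[THEN conjunct1]
    dc[THEN conjunct2, THEN conjunct1] dc[THEN conjunct2, THEN conjunct2] pc using j by (simp add: pvals)
qed


lemma step:
  assumes j: "j < 2*h" and pay: "\<forall>w\<in>V. payload pp w (m w) (hf w) j = ipay j w" and v: "v \<in> V"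
  shows "rcv pp v (hf v) j = (\<lambda>u. ipay j u) ` {u. E v u}"
proof -
  define cw where "cw w = penc pp (ipay j w)" for w
  have lenc: "length (cw w) = pL pp" if "w \<in> V" for w
    unfolding cw_def penc_def pL_def by (rule enc_len[OF trip_bits ipay_Adm[OF that j]])
  have decc: "pdec pp (cw w) = ipay j w" if "w \<in> V" for w
    unfolding cw_def penc_def pdec_def by (rule dec_enc[OF trip_bits ipay_Adm[OF that j]])
  have slot: "hf v (j * pS pp + s * pW pp + i) = (\<not> (sel pp s v \<and> cbit (cw v) i) \<and> (\<exists>w. E v w \<and> sel pp s w \<and> cbit (cw w) i))"
    if s: "s < pR pp" and i: "i < pW pp" for s i
  proof -
    have bw: "myact pp w (m w) (X (j * pS pp + s * pW pp + i) w) = (sel pp s w \<and> cbit (cw w) i)" if "w \<in> V" for w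
      using beep[OF s i j, of w] pay that by (simp add: cw_def)
    have "(\<exists>w. E v w \<and> myact pp w (m w) (X (j * pS pp + s * pW pp + i) w)) = (\<exists>w. E v w \<and> sel pp s w \<and> cbit (cw w) i)"
      using bw ug_E[OF ug] by blast
    thus ?thesis using heard[of v "j * pS pp + s * pW pp + i"] bw[OF v] by simp
  qed
  show ?thesis
  proof (intro set_eqI iffI)
    fix P assume "P \<in> rcv pp v (hf v) j"
    then obtain s where s: "s < pR pp" "\<not> sel pp s v" "valid (pL pp) (hf v) (j * pS pp + s * pW pp)"
      and P: "P = pdec pp (decode (pL pp) (hf v) (j * pS pp + s * pW pp))"
      unfolding rcv_def by blast
    define A where "A = {w. E v w \<and> sel pp s w}"
    have AV: "A \<subseteq> V" using ug_E[OF ug] by (auto simp: A_def)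
    have Hc: "\<forall>i<2 * pL pp. hf v (j * pS pp + s * pW pp + i) = (\<exists>w\<in>A. cbit (cw w) i)"
    proof (intro allI impI)
      fix i assume "i < 2 * pL pp"
      hence "i < pW pp" by (simp add: pW_def)
      thus "hf v (j * pS pp + s * pW pp + i) = (\<exists>w\<in>A. cbit (cw w) i)"
        using slot[OF s(1)] s(2) by (auto simp: A_def)
    qed
    have "\<forall>w\<in>A. length (cw w) = pL pp" using lenc AV by blast
    from or_code_valid[OF this pos(4) Hc s(3)]
    obtain w where w: "w \<in> A" "decode (pL pp) (hf v) (j * pS pp + s * pW pp) = cw w" by blast
    have "P = ipay j w" using P w decc AV by auto
    moreover have "E v w" using w by (simp add: A_def)
    ultimately show "P \<in> (\<lambda>u. ipay j u) ` {u. E v u}" by blast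
  next
    fix P assume "P \<in> (\<lambda>u. ipay j u) ` {u. E v u}"
    then obtain u where u: "E v u" and P: "P = ipay j u" by blast
    have uV: "u \<in> V" and uv: "u \<noteq> v" using ug_E[OF ug u] by auto
    define Nv where "Nv = {w. E v w}"
    define S0 where "S0 = insert v (Nv - {u})"
    have fN: "finite Nv" unfolding Nv_def by (rule finite_nbrs[OF ug])
    have uN: "u \<in> Nv" using u by (simp add: Nv_def)
    have cN: "card Nv \<le> \<Delta>" using deg v by (simp add: degree_def Nv_def)
    have "card S0 \<le> Suc (card (Nv - {u}))" unfolding S0_def by (simp add: card_insert_if fN)
    also have "card (Nv - {u}) = card Nv - 1" using uN fN by simp
    also have "Suc (card Nv - 1) = card Nv"
    proof -
      have "card Nv > 0" using uN fN by (auto simp: card_gt_0_iff)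
      thus ?thesis by simp
    qed
    finally have cS0: "card S0 \<le> \<Delta>" using cN by simp
    have S0N: "S0 \<subseteq> {1..pN pp}" using V_N v ug_E[OF ug] by (auto simp: S0_def Nv_def)
    have uS0: "u \<notin> S0" using uv by (simp add: S0_def)
    have uNN: "u \<in> {1..pN pp}" using V_N uV by blast
    have sp1: "\<forall>j<pK pp. \<forall>u\<in>{1..pN pp}. selF pp j u < pQ pp"
      using sel_ok unfolding selprop_def by (rule conjunct1)
    have sp2: "\<forall>u\<in>{1..pN pp}. \<forall>S. S \<subseteq> {1..pN pp} \<longrightarrow> card S \<le> \<Delta> \<longrightarrow> u \<notin> S \<longrightarrow> (\<exists>j<pK pp. selF pp j u \<notin> selF pp j ` S)"
      using sel_ok unfolding selprop_def by (rule conjunct2)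
    obtain jj where jj: "jj < pK pp" "selF pp jj u \<notin> selF pp jj ` S0"
      using sp2[rule_format, OF uNN S0N cS0 uS0] by blast
    have Fu: "selF pp jj u < pQ pp" using sp1[rule_format, OF jj(1) uNN] .
    define s where "s = jj * pQ pp + selF pp jj u"
    have sdiv: "s div pQ pp = jj" and smod: "s mod pQ pp = selF pp jj u"
      using Fu by (simp_all add: s_def)
    have sR: "s < pR pp"
    proof -
      have "s < jj * pQ pp + pQ pp" using Fu by (simp add: s_def)
      also have "\<dots> = Suc jj * pQ pp" by simp
      also have "\<dots> \<le> pK pp * pQ pp" using jj(1) by (intro mult_right_mono) auto
      finally show ?thesis by (simp add: pR_def)
    qed
    have selu: "sel pp s u" by (simp add: sel_def sdiv smod)
    have selS0: "\<not> sel pp s w" if "w \<in> S0" for w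
    proof
      assume "sel pp s w"
      hence "selF pp jj w = selF pp jj u" by (simp add: sel_def sdiv smod)
      hence "selF pp jj u \<in> selF pp jj ` S0" using that by (intro image_eqI[of _ _ w]) simp_all
      thus False using jj(2) by simp
    qed
    have selv: "\<not> sel pp s v" using selS0 by (simp add: S0_def)
    have Hc: "\<forall>i<2 * pL pp. hf v (j * pS pp + s * pW pp + i) = cbit (cw u) i"
    proof (intro allI impI)
      fix i assume "i < 2 * pL pp"
      hence iW: "i < pW pp" by (simp add: pW_def)
      have "(\<exists>w. E v w \<and> sel pp s w \<and> cbit (cw w) i) = cbit (cw u) i"
      proof
        assume "\<exists>w. E v w \<and> sel pp s w \<and> cbit (cw w) i"
        then obtain w where w: "E v w" "sel pp s w" "cbit (cw w) i" by blast
        have "w = u"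
        proof (rule ccontr)
          assume "w \<noteq> u"
          hence "w \<in> S0" using w(1) by (simp add: S0_def Nv_def)
          thus False using selS0 w(2) by blast
        qed
        thus "cbit (cw u) i" using w(3) by simp
      next
        assume "cbit (cw u) i" thus "\<exists>w. E v w \<and> sel pp s w \<and> cbit (cw w) i" using u selu by blast
      qed
      thus "hf v (j * pS pp + s * pW pp + i) = cbit (cw u) i" using slot[OF sR iW] selv by simp
    qed
    have sc: "valid (pL pp) (hf v) (j * pS pp + s * pW pp) \<and> decode (pL pp) (hf v) (j * pS pp + s * pW pp) = cw u"
      by (rule single_code[OF lenc[OF uV] Hc])
    have "pdec pp (decode (pL pp) (hf v) (j * pS pp + s * pW pp)) = P" using sc decc[OF uV] P by simp
    moreover have "s \<in> {s. s < pR pp \<and> \<not> sel pp s v \<and> valid (pL pp) (hf v) (j * pS pp + s * pW pp)}"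
      using sR selv sc by simp
    ultimately show "P \<in> rcv pp v (hf v) j" unfolding rcv_def by blast
  qed
qed


definition invar :: "nat \<Rightarrow> bool" where
  "invar j \<longleftrightarrow> (\<forall>v\<in>V. (\<forall>t. t \<le> j \<and> t \<le> h \<longrightarrow> lball pp v (hf v) t = ball E v t) \<and>
                      (\<forall>i. h + i \<le> j \<longrightarrow> lkn pp v (m v) (hf v) i = kn E m h v i))"

lemma inv_payload:
  assumes "invar j" "j < 2*h" "v \<in> V"
  shows "payload pp v (m v) (hf v) j = ipay j v"
proof (cases "j < h")
  case True
  have "lball pp v (hf v) j = ball E v j" using assms True by (simp add: invar_def)
  thus ?thesis using True by (simp add: payload_def ipay_def pvals)
next
  case False
  have "lkn pp v (m v) (hf v) (j - h) = kn E m h v (j - h)" using assms False by (simp add: invar_def)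
  thus ?thesis using False by (simp add: payload_def ipay_def pvals)
qed

lemma inv_all: "j \<le> 2*h \<Longrightarrow> invar j"
proof (induction j)
  case 0
  show ?case using h1 by (auto simp: invar_def)
next
  case (Suc j)
  have j: "j < 2*h" using Suc.prems by simp
  have IH: "invar j" using Suc.IH j by simp
  have pay: "\<forall>w\<in>V. payload pp w (m w) (hf w) j = ipay j w" using inv_payload[OF IH j] by blast
  show ?case unfolding invar_def
  proof (intro ballI conjI allI impI)
    fix v assume v: "v \<in> V"
    have R: "rcv pp v (hf v) j = (\<lambda>u. ipay j u) ` {u. E v u}" by (rule step[OF j pay v])
    have IHb: "lball pp v (hf v) t = ball E v t" if "t \<le> j" "t \<le> h" for t
      using IH v that by (simp add: invar_def)
    have IHk: "lkn pp v (m v) (hf v) i = kn E m h v i" if "h + i \<le> j" for i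
      using IH v that by (simp add: invar_def)
    show Bt: "lball pp v (hf v) t = ball E v t" if "t \<le> Suc j \<and> t \<le> h" for t
    proof (cases "t \<le> j")
      case True thus ?thesis using IHb that by simp
    next
      case False
      hence t: "t = Suc j" and jh: "j < h" using that by auto
      have "lball pp v (hf v) (Suc j) = insert v (\<Union>P\<in>rcv pp v (hf v) j. fst ` P)" by simp
      also have "\<dots> = insert v (\<Union>u\<in>{u. E v u}. fst ` ipay j u)" using R by simp
      also have "\<dots> = insert v (\<Union>u\<in>{u. E v u}. ball E u j)"
        using jh by (simp add: ipay_def image_image)
      also have "\<dots> = ball E v (Suc j)" by simp
      finally show ?thesis using t by simp
    qed
    fix i assume hi: "h + i \<le> Suc j"
    show "lkn pp v (m v) (hf v) i = kn E m h v i"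
    proof (cases "h + i \<le> j")
      case True thus ?thesis using IHk by simp
    next
      case False
      hence hij: "h + i = Suc j" using hi by simp
      show ?thesis
      proof (cases i)
        case 0
        have "lball pp v (hf v) h = ball E v h" using Bt[of h] hij 0 by simp
        thus ?thesis using 0 by (auto simp: kn_def pvals)
      next
        case (Suc i')
        have hj: "h + i' = j" using hij Suc by simp
        have ih: "i' < h" using hj j by simp
        have k1: "lkn pp v (m v) (hf v) i' = kn E m h v i'" using IHk hj by simp
        have k2: "lball pp v (hf v) (h - Suc i') = ball E v (h - Suc i')" using IHb hj by simp
        have k3: "rcv pp v (hf v) (pH pp + i') = (\<lambda>u. kn E m h u i') ` {u. E v u}"
          using R hj by (auto simp: ipay_def pvals)
        have "lkn pp v (m v) (hf v) (Suc i') =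
              {t \<in> kn E m h v i' \<union> (\<Union>u\<in>{u. E v u}. kn E m h u i'). fst (snd t) \<in> ball E v (h - Suc i')}"
          using k1 k2 k3 by (simp add: pvals)
        also have "\<dots> = kn E m h v (Suc i')" by (rule kn_Suc[OF ug ih, symmetric])
        finally show ?thesis using Suc by simp
      qed
    qed
  qed
qed

lemma correct:
  assumes u: "u \<in> V" and v: "v \<in> V" and hop: "within_hops E h u v" and mx: "m u v = Some x"
  shows "myout pp v (m v) (X (2 * h * pS pp) v) u = Some x"
proof -
  have ag: "\<forall>k < (pH pp + h) * pS pp. X (2 * h * pS pp) v ! k = hf v k"
  proof (intro allI impI)
    fix k assume "k < (pH pp + h) * pS pp"
    hence "k < 2 * h * pS pp" by (simp add: pvals mult_2)
    thus "X (2 * h * pS pp) v ! k = hf v k" by (simp add: hf_def exec_nth)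
  qed
  have "lkn pp v (m v) (\<lambda>k. X (2 * h * pS pp) v ! k) h = lkn pp v (m v) (hf v) h"
    by (rule lkn_cong[OF ag])
  also have "\<dots> = kn E m h v h" using inv_all[of "2*h"] v by (simp add: invar_def)
  finally have K: "lkn pp v (m v) (\<lambda>k. X (2 * h * pS pp) v ! k) h = kn E m h v h" .
  have ub: "u \<in> ball E v h" by (rule within_ball[OF ug hop])
  have mem: "(u, v, y) \<in> kn E m h v h \<longleftrightarrow> m u v = Some y" for y
    using ub by (simp add: kn_def)
  have ex: "\<exists>y. (u, v, y) \<in> kn E m h v h" using mem mx by blast
  have "(SOME y. (u, v, y) \<in> kn E m h v h) = x"
    using mem mx by simp
  thus ?thesis unfolding myout_def Let_def K pvals using ex by simp
qed

end

lemma a_bound: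
  fixes n :: nat and c :: real
  assumes n1: "n \<ge> 1" and c1: "c \<ge> 1"
  shows "real (nat \<lceil>log 2 (real (nat \<lfloor>real n powr c\<rfloor>) + 2)\<rceil>) \<le> (c + 3) * log 2 (real n + 1)"
proof -
  define x where "x = real n powr c"
  have x1: "x \<ge> 1" using n1 c1 by (simp add: x_def ge_one_powr_ge_zero)
  define N where "N = nat \<lfloor>x\<rfloor>"
  have N: "real N \<le> x" using x1 by (simp add: N_def)
  have lpos: "log 2 (real N + 2) \<ge> 0" by simp
  have "real (nat \<lceil>log 2 (real N + 2)\<rceil>) = real_of_int \<lceil>log 2 (real N + 2)\<rceil>"
    using lpos by simp
  also have "\<dots> \<le> log 2 (real N + 2) + 1" by linarith
  also have "log 2 (real N + 2) \<le> log 2 (3 * x)"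
    using N x1 by (subst log_le_cancel_iff) auto
  also have "log 2 (3 * x) = log 2 3 + log 2 x" using x1 by (simp add: log_mult)
  also have "log 2 x = c * log 2 (real n)" using n1 by (simp add: x_def log_powr)
  also have "log 2 (3::real) \<le> 2"
  proof -
    have "log 2 (3::real) \<le> log 2 4" by simp
    also have "log 2 (4::real) = 2"
    proof -
      have "log 2 (4::real) = log 2 (2 powr 2)" by simp
      also have "\<dots> = 2" by (rule log_powr_cancel) auto
      finally show ?thesis .
    qed
    finally show ?thesis .
  qed
  also have "c * log 2 (real n) \<le> c * log 2 (real n + 1)"
    using n1 c1 by (intro mult_left_mono) auto
  finally have A: "real (nat \<lceil>log 2 (real N + 2)\<rceil>) \<le> 3 + c * log 2 (real n + 1)" by simp
  have L1: "log 2 (real n + 1) \<ge> 1" using n1 by simp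
  have "3 + c * log 2 (real n + 1) \<le> 3 * log 2 (real n + 1) + c * log 2 (real n + 1)"
    using L1 by simp
  also have "\<dots> = (c + 3) * log 2 (real n + 1)" by (simp add: algebra_simps)
  finally show ?thesis using A by (simp add: N_def x_def)
qed

lemma nat_bound:
  fixes h B \<Delta> a :: nat
  assumes D1: "\<Delta> \<ge> 1" and B1: "B \<ge> 1" and a1: "a \<ge> 1"
  shows "2 * h * (((\<Delta> + 1) * a * (2 * \<Delta>)) * (2 * (4 * \<Delta> ^ h * (2 * a + B + 1))))
         \<le> 256 * h * B * \<Delta> ^ (h + 2) * a^2"
proof -
  have e1: "\<Delta> + 1 \<le> 2 * \<Delta>" using D1 by simp
  have e2: "2 * a + B + 1 \<le> 4 * a * B"
  proof -
    have "2 * a \<le> 2 * a * B" using B1 by simp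
    moreover have "B \<le> a * B" using a1 by simp
    moreover have "1 \<le> a * B" using a1 B1 by simp
    ultimately show ?thesis by linarith
  qed
  have "2 * h * (((\<Delta> + 1) * a * (2 * \<Delta>)) * (2 * (4 * \<Delta> ^ h * (2 * a + B + 1))))
        = 32 * h * a * \<Delta> * \<Delta> ^ h * ((\<Delta> + 1) * (2 * a + B + 1))" by (simp add: algebra_simps)
  also have "\<dots> \<le> 32 * h * a * \<Delta> * \<Delta> ^ h * ((2 * \<Delta>) * (4 * a * B))"
    by (intro mult_left_mono mult_mono e1 e2) auto
  also have "\<dots> = 256 * h * B * \<Delta> ^ (h + 2) * a^2" by (simp add: algebra_simps power2_eq_square)
  finally show ?thesis .
qed

theorem theorem8:
  shows "\<exists>(k::nat) (act::beep_rule) (out::output_rule) (T::params \<Rightarrow> nat).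
    \<forall>c::real. c \<ge> 1 \<longrightarrow> (\<exists>C::real. C > 0 \<and>
      (\<forall>n \<Delta> h B V E m.
         undirected_graph V E \<longrightarrow> card V = n \<longrightarrow> V \<subseteq> {1..nat \<lfloor>real n powr c\<rfloor>} \<longrightarrow>
         max_degree_is V E \<Delta> \<longrightarrow> B \<ge> 1 \<longrightarrow>
         (\<forall>u v x. m u v = Some x \<longrightarrow> length x \<le> B) \<longrightarrow>
         solves_simulation act out (n, c, \<Delta>, h, B) (T (n, c, \<Delta>, h, B)) V E m \<and>
         real (T (n, c, \<Delta>, h, B))
           \<le> C * real h * real B * real \<Delta> ^ (h + 2) * (log 2 (real n + 1)) ^ k))"
proof (rule exI[of _ "2::nat"], rule exI[of _ myact], rule exI[of _ myout], rule exI[of _ myT], intro allI impI)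
  fix c :: real assume c1: "c \<ge> 1"
  show "\<exists>C::real. C > 0 \<and>
      (\<forall>n \<Delta> h B V E m.
         undirected_graph V E \<longrightarrow> card V = n \<longrightarrow> V \<subseteq> {1..nat \<lfloor>real n powr c\<rfloor>} \<longrightarrow>
         max_degree_is V E \<Delta> \<longrightarrow> B \<ge> 1 \<longrightarrow>
         (\<forall>u v x. m u v = Some x \<longrightarrow> length x \<le> B) \<longrightarrow>
         solves_simulation myact myout (n, c, \<Delta>, h, B) (myT (n, c, \<Delta>, h, B)) V E m \<and>
         real (myT (n, c, \<Delta>, h, B))
           \<le> C * real h * real B * real \<Delta> ^ (h + 2) * (log 2 (real n + 1)) ^ 2)"
  proof (intro exI[of _ "256 * (c + 3)^2"] conjI allI impI)
    show "(0::real) < 256 * (c + 3)^2" using c1 by simp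
    fix n \<Delta> h B :: nat and V :: "nat set" and E :: "nat \<Rightarrow> nat \<Rightarrow> bool" and m :: "nat \<Rightarrow> nat \<Rightarrow> bool list option"
    assume ug: "undirected_graph V E" and cardV: "card V = n"
      and Vsub: "V \<subseteq> {1..nat \<lfloor>real n powr c\<rfloor>}" and maxdeg: "max_degree_is V E \<Delta>"
      and B1: "B \<ge> 1" and mlen: "\<forall>u v x. m u v = Some x \<longrightarrow> length x \<le> B"
    let ?p = "(n, c, \<Delta>, h, B)"
    have lg0: "log 2 (real n + 1) \<ge> 0" by simp
    have both: "solves_simulation myact myout ?p (myT ?p) V E m \<and>
         real (myT ?p) \<le> 256 * (c + 3)^2 * real h * real B * real \<Delta> ^ (h + 2) * (log 2 (real n + 1)) ^ 2"
    proof (cases "n = 0 \<or> \<Delta> = 0 \<or> h = 0")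
      case True
      have T0: "myT ?p = 0" using True by (simp add: myT_def pD_def pH_def)
      have vac: False if u: "u \<in> V" and v: "v \<in> V" and uv: "u \<noteq> v" and hop: "within_hops E h u v" for u v
      proof -
        obtain k where k: "k \<le> h" "(u, v) \<in> {(x, y). E x y} ^^ k" using hop by (auto simp: within_hops_def)
        have fV: "finite V" using ug by (simp add: undirected_graph_def)
        show False
        proof (cases k)
          case 0 thus False using k uv by simp
        next
          case (Suc k')
          have "(u, v) \<in> {(x, y). E x y} ^^ Suc k'" using k(2) Suc by simp
          from relpow_Suc_D2[OF this] obtain z where "(u, z) \<in> {(x, y). E x y}" by blast
          hence Euz: "E u z" by simp
          have "n \<noteq> 0" using cardV u fV card_gt_0_iff by blast
          moreover have "h \<noteq> 0" using k Suc by simp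
          moreover have "\<Delta> \<noteq> 0"
          proof -
            have "degree E u \<le> \<Delta>" using maxdeg u by (simp add: max_degree_is_def)
            moreover have "degree E u > 0"
              using Euz finite_nbrs[OF ug, of u] by (auto simp: degree_def card_gt_0_iff)
            ultimately show ?thesis by simp
          qed
          ultimately show False using True by simp
        qed
      qed
      have "solves_simulation myact myout ?p (myT ?p) V E m"
        unfolding solves_simulation_def Let_def using vac by auto
      moreover have "real (myT ?p) \<le> 256 * (c + 3)^2 * real h * real B * real \<Delta> ^ (h + 2) * (log 2 (real n + 1)) ^ 2"
        using T0 lg0 by simp
      ultimately show ?thesis by simp
    next
      case False
      hence n0: "n \<noteq> 0" and D1: "\<Delta> \<ge> 1" and h1: "h \<ge> 1" by auto
      interpret S: setting n c \<Delta> h B V E m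
        by (unfold_locales) (use ug cardV Vsub maxdeg B1 mlen n0 D1 h1 in auto)
      have T: "myT ?p = 2 * h * pS ?p" using False by (simp add: myT_def pD_def pH_def)
      have sol: "solves_simulation myact myout ?p (myT ?p) V E m"
        unfolding solves_simulation_def Let_def T using S.correct by simp
      define a where "a = pa ?p"
      have a1: "a \<ge> 1" using S.a1 by (simp add: a_def)
      have nb: "myT ?p \<le> 256 * h * B * \<Delta> ^ (h + 2) * a^2"
        using nat_bound[OF D1 B1 a1, of h] unfolding T
        by (simp add: pS_def pR_def pK_def pQ_def pW_def pL_def pM_def pl_def a_def S.pvals)
      have ab: "real a \<le> (c + 3) * log 2 (real n + 1)"
        using a_bound[of n c] n0 c1 by (simp add: a_def pa_def S.pvals)
      have "real (myT ?p) \<le> real (256 * h * B * \<Delta> ^ (h + 2) * a^2)"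
        using nb by (simp only: of_nat_le_iff)
      also have "\<dots> = 256 * real h * real B * real \<Delta> ^ (h + 2) * (real a)^2" by simp
      also have "\<dots> \<le> 256 * real h * real B * real \<Delta> ^ (h + 2) * ((c + 3) * log 2 (real n + 1))^2"
        by (intro mult_left_mono power_mono ab) auto
      also have "\<dots> = 256 * (c + 3)^2 * real h * real B * real \<Delta> ^ (h + 2) * (log 2 (real n + 1)) ^ 2"
        by (simp add: power_mult_distrib)
      finally show ?thesis using sol by simp
    qed
    show "solves_simulation myact myout ?p (myT ?p) V E m" using both by simp
    show "real (myT ?p) \<le> 256 * (c + 3)^2 * real h * real B * real \<Delta> ^ (h + 2) * (log 2 (real n + 1)) ^ 2"
      using both by simp
  qed
qed

end
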